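(* Let $\mathcal A$ be an NFA and let $R$ be a strict partial order on its states with $R\subseteq\ \subseteq^{\mathrm{bw}}$. Then $P(R,\mathrm{id})$ is good for pruning on NFA: $\mathcal L(\mathrm{Prune}(\mathcal A,P(R,\mathrm{id})))=\mathcal L(\mathcal A)$. In particular this holds for $R$ the strict part of $\subseteq^{\mathrm{bw}}$.
   Context: An NFA is $\mathcal A=(\Sigma,Q,I,F,\delta)$, $\delta\subseteq Q\times\Sigma\times Q$ (assumed forward and backward complete); its language is the set of finite words having a finite trace starting in $I$ and ending in $F$. Backward finite trace inclusion: $p\subseteq^{\mathrm{bw}}q$ iff for every finite word $w$, if there is a finite $w$-trace starting in $I$ and ending in $p$, then there is a finite $w$-trace starting in $I$ and ending in $q$. Strict part: $p\subseteq q$ and not $q\subseteq p$. $\mathrm{Prune}(\mathcal A,P)$ has transition set $\{t\in\delta:\nexists t'\in\delta,(t,t')\in P\}$; $P(R_b,R_f)=\{((p,\sigma,r),(p',\sigma,r'))\in\delta\times\delta:p\,R_b\,p',\ r\,R_f\,r'\}$; $\mathrm{id}$ is the identity. *)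

theory Defs
  imports Main
begin

record ('s, 'q) nfa =
  alph  :: "'s set"
  states :: "'q set"
  init  :: "'q set"
  final :: "'q set"
  trans :: "('q \<times> 's \<times> 'q) set"

definition wf_nfa :: "('s, 'q) nfa \<Rightarrow> bool" where
  "wf_nfa A \<longleftrightarrow> finite (alph A) \<and> finite (states A)
     \<and> init A \<subseteq> states A \<and> final A \<subseteq> states A
     \<and> trans A \<subseteq> states A \<times> alph A \<times> states A"

definition forward_complete :: "('s, 'q) nfa \<Rightarrow> bool" where
  "forward_complete A \<longleftrightarrow>
     (\<forall>p\<in>states A. \<forall>a\<in>alph A. \<exists>q. (p, a, q) \<in> trans A)"

definition backward_complete :: "('s, 'q) nfa \<Rightarrow> bool" where
  "backward_complete A \<longleftrightarrow>
     (\<forall>q\<in>states A. \<forall>a\<in>alph A. \<exists>p. (p, a, q) \<in> trans A)"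

definition is_trace :: "('q \<times> 's \<times> 'q) set \<Rightarrow> 's list \<Rightarrow> 'q list \<Rightarrow> bool" where
  "is_trace \<delta> w qs \<longleftrightarrow> length qs = Suc (length w)
     \<and> (\<forall>i < length w. (qs ! i, w ! i, qs ! Suc i) \<in> \<delta>)"

definition lang :: "('s, 'q) nfa \<Rightarrow> 's list set" where
  "lang A = {w. set w \<subseteq> alph A \<and> (\<exists>qs. is_trace (trans A) w qs
              \<and> hd qs \<in> init A \<and> last qs \<in> final A)}"

definition bw_incl :: "('s, 'q) nfa \<Rightarrow> 'q \<Rightarrow> 'q \<Rightarrow> bool" where
  "bw_incl A p q \<longleftrightarrow> (\<forall>w. set w \<subseteq> alph A \<longrightarrow>
     (\<exists>qs. is_trace (trans A) w qs \<and> hd qs \<in> init A \<and> last qs = p) \<longrightarrow>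
     (\<exists>qs. is_trace (trans A) w qs \<and> hd qs \<in> init A \<and> last qs = q))"

definition strict_part :: "('q \<Rightarrow> 'q \<Rightarrow> bool) \<Rightarrow> 'q \<Rightarrow> 'q \<Rightarrow> bool" where
  "strict_part R p q \<longleftrightarrow> R p q \<and> \<not> R q p"

definition P_rel :: "('s, 'q) nfa \<Rightarrow> ('q \<Rightarrow> 'q \<Rightarrow> bool) \<Rightarrow> ('q \<Rightarrow> 'q \<Rightarrow> bool)
     \<Rightarrow> (('q \<times> 's \<times> 'q) \<times> ('q \<times> 's \<times> 'q)) set" where
  "P_rel A Rb Rf = {((p, a, r), (p', a', r')).
      (p, a, r) \<in> trans A \<and> (p', a', r') \<in> trans A \<and> a = a' \<and> Rb p p' \<and> Rf r r'}"

definition prune :: "('s, 'q) nfa \<Rightarrow> (('q \<times> 's \<times> 'q) \<times> ('q \<times> 's \<times> 'q)) set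
     \<Rightarrow> ('s, 'q) nfa" where
  "prune A P = A\<lparr> trans := {t \<in> trans A. \<nexists>t'. t' \<in> trans A \<and> (t, t') \<in> P} \<rparr>"

definition strict_po_on :: "'q set \<Rightarrow> ('q \<Rightarrow> 'q \<Rightarrow> bool) \<Rightarrow> bool" where
  "strict_po_on S R \<longleftrightarrow> (\<forall>x\<in>S. \<not> R x x)
     \<and> (\<forall>x\<in>S. \<forall>y\<in>S. \<forall>z\<in>S. R x y \<longrightarrow> R y z \<longrightarrow> R x z)"

end

theory Submission
  imports Defs
begin

lemma trace_nil: "is_trace d [] qs \<longleftrightarrow> (\<exists>q. qs = [q])"
  unfolding is_trace_def by (cases qs) auto

lemma trace_snoc:
  assumes "is_trace d v qs" "(last qs, a, q) \<in> d"
  shows "is_trace d (v @ [a]) (qs @ [q])"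
proof -
  have l: "length qs = Suc (length v)" using assms(1) by (simp add: is_trace_def)
  have ne: "qs \<noteq> []" using l by auto
  have lq: "last qs = qs ! length v" using l ne by (simp add: last_conv_nth)
  show ?thesis unfolding is_trace_def
  proof (intro conjI allI impI)
    show "length (qs @ [q]) = Suc (length (v @ [a]))" using l by simp
  next
    fix i assume i: "i < length (v @ [a])"
    show "((qs @ [q]) ! i, (v @ [a]) ! i, (qs @ [q]) ! Suc i) \<in> d"
    proof (cases "i < length v")
      case True
      then show ?thesis using assms(1) l by (simp add: is_trace_def nth_append)
    next
      case False
      then have "i = length v" using i by simp
      then show ?thesis using assms(2) lq l by (simp add: nth_append)
    qed
  qed
qed

lemma trace_unsnoc:
  assumes "is_trace d (v @ [a]) qs"
  shows "is_trace d v (butlast qs) \<and> (last (butlast qs), a, last qs) \<in> d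
         \<and> hd (butlast qs) = hd qs"
proof -
  have l: "length qs = Suc (Suc (length v))" using assms by (simp add: is_trace_def)
  have t: "\<forall>i < Suc (length v). (qs ! i, (v@[a]) ! i, qs ! Suc i) \<in> d"
    using assms by (simp add: is_trace_def)
  have 1: "is_trace d v (butlast qs)" unfolding is_trace_def
  proof (intro conjI allI impI)
    show "length (butlast qs) = Suc (length v)" using l by simp
  next
    fix i assume i: "i < length v"
    then show "(butlast qs ! i, v ! i, butlast qs ! Suc i) \<in> d"
      using t[rule_format, of i] l by (simp add: nth_butlast nth_append)
  qed
  have lb: "length (butlast qs) = Suc (length v)" using l by simp
  have ne1: "qs \<noteq> []" using l by auto
  have ne2: "butlast qs \<noteq> []" using lb by (metis list.size(3) Zero_not_Suc)
  note ne = ne1 ne2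
  have "last (butlast qs) = qs ! length v" using ne l
    by (simp add: last_conv_nth nth_butlast length_butlast)
  moreover have "last qs = qs ! Suc (length v)" using ne l by (simp add: last_conv_nth)
  ultimately have 2: "(last (butlast qs), a, last qs) \<in> d"
    using t[rule_format, of "length v"] by (simp add: nth_append)
  have 3: "hd (butlast qs) = hd qs" using l
    by (cases qs) (auto simp: hd_conv_nth nth_butlast)
  show ?thesis using 1 2 3 by simp
qed

lemma maximal_exists:
  assumes "finite S" "S \<noteq> {}" "S \<subseteq> T" "strict_po_on T R"
  shows "\<exists>x\<in>S. \<forall>y\<in>S. \<not> R x y"
proof -
  define f where "f x = card {z\<in>S. R x z}" for x
  obtain x0 where "x0 \<in> S" using assms(2) by blast
  obtain x where x: "x \<in> S" "\<forall>y\<in>S. f x \<le> f y"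
  proof -
    have "\<exists>x\<in>S. \<forall>y\<in>S. f x \<le> f y"
      using assms(1,2) by (metis arg_min_if_finite(1) arg_min_if_finite(2) not_le)
    then show ?thesis using that by blast
  qed
  have "\<forall>y\<in>S. \<not> R x y"
  proof (intro ballI notI)
    fix y assume y: "y \<in> S" "R x y"
    have sub: "{z\<in>S. R y z} \<subset> {z\<in>S. R x z}"
    proof
      show "{z\<in>S. R y z} \<subseteq> {z\<in>S. R x z}"
        using assms(3,4) x(1) y unfolding strict_po_on_def by blast
      have "\<not> R y y" using assms(3,4) y(1) unfolding strict_po_on_def by blast
      then show "{z\<in>S. R y z} \<noteq> {z\<in>S. R x z}" using y by blast
    qed
    have "f y < f x" unfolding f_def using psubset_card_mono[OF _ sub] assms(1) by simp
    with x(2) y(1) show False by force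
  qed
  then show ?thesis using x(1) by blast
qed

lemma reach:
  assumes wf: "wf_nfa A" and po: "strict_po_on (states A) R"
    and inc: "\<forall>p\<in>states A. \<forall>q\<in>states A. R p q \<longrightarrow> bw_incl A p q"
  shows "set w \<subseteq> alph A \<Longrightarrow> is_trace (trans A) w qs \<Longrightarrow> hd qs \<in> init A \<Longrightarrow>
    \<exists>qs'. is_trace (trans (prune A (P_rel A R (=)))) w qs' \<and> hd qs' \<in> init A \<and> last qs' = last qs"
proof (induction w arbitrary: qs rule: rev_induct)
  case Nil
  then obtain q where "qs = [q]" using trace_nil by metis
  then show ?case using Nil by (auto simp: trace_nil)
next
  case (snoc a v)
  from trace_unsnoc[OF snoc.prems(2)] have
    tv: "is_trace (trans A) v (butlast qs)" and
    tr: "(last (butlast qs), a, last qs) \<in> trans A" and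
    hd: "hd (butlast qs) = hd qs" by auto
  define q where "q = last qs"
  define S where "S = {p'. p' \<in> states A \<and> (p', a, q) \<in> trans A \<and>
     (\<exists>ts. is_trace (trans A) v ts \<and> hd ts \<in> init A \<and> last ts = p')}"
  have tsub: "trans A \<subseteq> states A \<times> alph A \<times> states A" using wf by (simp add: wf_nfa_def)
  have pst: "last (butlast qs) \<in> states A" using tr tsub by blast
  have "hd (butlast qs) \<in> init A" using hd snoc.prems(3) by simp
  then have "last (butlast qs) \<in> S" unfolding S_def q_def
    using tv tr pst by blast
  moreover have ss: "S \<subseteq> states A" unfolding S_def by auto
  moreover have "finite S" using wf ss finite_subset unfolding wf_nfa_def by blast
  ultimately obtain p0 where p0: "p0 \<in> S" "\<forall>y\<in>S. \<not> R p0 y"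
    using maximal_exists[OF _ _ _ po] by blast
  from p0(1) obtain ts where ts: "is_trace (trans A) v ts" "hd ts \<in> init A" "last ts = p0"
    and p0s: "p0 \<in> states A" and p0t: "(p0, a, q) \<in> trans A" unfolding S_def by blast
  have sv: "set v \<subseteq> alph A" using snoc.prems(1) by simp
  obtain ts' where ts': "is_trace (trans (prune A (P_rel A R (=)))) v ts'"
    "hd ts' \<in> init A" "last ts' = last ts"
    using snoc.IH[OF sv ts(1) ts(2)] by blast
  have kept: "(p0, a, q) \<in> trans (prune A (P_rel A R (=)))"
  proof -
    have "\<not> (\<exists>p''. (p'', a, q) \<in> trans A \<and> R p0 p'')"
    proof
      assume "\<exists>p''. (p'', a, q) \<in> trans A \<and> R p0 p''"
      then obtain p'' where h: "(p'', a, q) \<in> trans A" "R p0 p''" by blast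
      have p''s: "p'' \<in> states A" using h(1) tsub by blast
      have "bw_incl A p0 p''" using inc p0s p''s h(2) by blast
      then have imp: "(\<exists>qs. is_trace (trans A) v qs \<and> hd qs \<in> init A \<and> last qs = p0) \<longrightarrow>
          (\<exists>qs. is_trace (trans A) v qs \<and> hd qs \<in> init A \<and> last qs = p'')"
        using sv unfolding bw_incl_def by blast
      have "\<exists>qs. is_trace (trans A) v qs \<and> hd qs \<in> init A \<and> last qs = p0" using ts by blast
      with imp obtain us where "is_trace (trans A) v us" "hd us \<in> init A" "last us = p''"
        by blast
      then have "p'' \<in> S" unfolding S_def using p''s h(1) by blast
      then show False using p0(2) h(2) by blast
    qed
    note N = this
    have nx: "\<nexists>t'. t' \<in> trans A \<and> ((p0,a,q),t') \<in> P_rel A R (=)"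
    proof
      assume "\<exists>t'. t' \<in> trans A \<and> ((p0,a,q),t') \<in> P_rel A R (=)"
      then obtain t' where t': "t' \<in> trans A" "((p0,a,q),t') \<in> P_rel A R (=)" by blast
      obtain x y z where "t' = (x,y,z)" by (cases t') auto
      with t' have xyz: "(x,y,z) \<in> trans A" "((p0,a,q),(x,y,z)) \<in> P_rel A R (=)" by auto
      then have "y = a" "z = q" "R p0 x" by (simp_all add: P_rel_def)
      then show False using N xyz(1) by blast
    qed
    show ?thesis unfolding prune_def using p0t nx by simp
  qed
  have "(last ts', a, q) \<in> trans (prune A (P_rel A R (=)))" using kept ts'(3) ts(3) by simp
  from trace_snoc[OF ts'(1) this]
  have "is_trace (trans (prune A (P_rel A R (=)))) (v @ [a]) (ts' @ [q])" .
  moreover have "ts' \<noteq> []" using ts'(1) unfolding is_trace_def by (metis list.size(3) Zero_not_Suc)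
  then have "hd (ts' @ [q]) \<in> init A" using ts'(2) by simp
  moreover have "last (ts' @ [q]) = last qs" unfolding q_def by simp
  ultimately show ?case by blast
qed

lemma prune_sub: "trans (prune A P) \<subseteq> trans A" by (auto simp: prune_def)

lemma trace_mono: "is_trace d w qs \<Longrightarrow> d \<subseteq> d' \<Longrightarrow> is_trace d' w qs"
  unfolding is_trace_def by blast

lemma prune_fields: "alph (prune A P) = alph A" "init (prune A P) = init A"
  "final (prune A P) = final A" by (simp_all add: prune_def)

lemma general:
  assumes wf: "wf_nfa A" and po: "strict_po_on (states A) R"
    and inc: "\<forall>p\<in>states A. \<forall>q\<in>states A. R p q \<longrightarrow> bw_incl A p q"
  shows "lang (prune A (P_rel A R (=))) = lang A"
proof
  show "lang (prune A (P_rel A R (=))) \<subseteq> lang A"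
  proof
    fix w assume "w \<in> lang (prune A (P_rel A R (=)))"
    then obtain qs where "set w \<subseteq> alph A" "is_trace (trans (prune A (P_rel A R (=)))) w qs"
       "hd qs \<in> init A" "last qs \<in> final A"
      unfolding lang_def prune_fields by blast
    then show "w \<in> lang A" unfolding lang_def using trace_mono[OF _ prune_sub] by blast
  qed
next
  show "lang A \<subseteq> lang (prune A (P_rel A R (=)))"
  proof
    fix w assume "w \<in> lang A"
    then obtain qs where "set w \<subseteq> alph A" "is_trace (trans A) w qs" "hd qs \<in> init A" "last qs \<in> final A"
      unfolding lang_def by blast
    with reach[OF wf po inc] obtain qs' where
      "is_trace (trans (prune A (P_rel A R (=)))) w qs'" "hd qs' \<in> init A" "last qs' = last qs"
      by blast
    then show "w \<in> lang (prune A (P_rel A R (=)))"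
      unfolding lang_def prune_fields using \<open>set w \<subseteq> alph A\<close> \<open>last qs \<in> final A\<close> by auto
  qed
qed

lemma bw_trans: "bw_incl A p q \<Longrightarrow> bw_incl A q r \<Longrightarrow> bw_incl A p r"
  unfolding bw_incl_def by blast

lemma bw_refl: "bw_incl A p p"
  unfolding bw_incl_def by blast

theorem theorem5p7:
  fixes A :: "('s, 'q) nfa" and R :: "'q \<Rightarrow> 'q \<Rightarrow> bool"
  assumes "wf_nfa A" and "forward_complete A" and "backward_complete A"
    and "strict_po_on (states A) R"
    and "\<forall>p\<in>states A. \<forall>q\<in>states A. R p q \<longrightarrow> bw_incl A p q"
  shows "lang (prune A (P_rel A R (=))) = lang A
    \<and> lang (prune A (P_rel A (strict_part (bw_incl A)) (=))) = lang A"
proof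
  show "lang (prune A (P_rel A R (=))) = lang A" using general[OF assms(1,4,5)] .
  have tr: "strict_part (bw_incl A) x z"
    if h1: "strict_part (bw_incl A) x y" and h2: "strict_part (bw_incl A) y z" for x y z
  proof -
    have xy: "bw_incl A x y" and yx: "\<not> bw_incl A y x" and yz: "bw_incl A y z"
      using h1 h2 unfolding strict_part_def by auto
    have xz: "bw_incl A x z" using bw_trans[OF xy yz] .
    have "\<not> bw_incl A z x"
    proof
      assume "bw_incl A z x"
      then have "bw_incl A y x" using bw_trans[OF yz] by blast
      then show False using yx by contradiction
    qed
    then show ?thesis using xz unfolding strict_part_def by blast
  qed
  have irr: "\<not> strict_part (bw_incl A) x x" for x by (simp add: strict_part_def)
  have po: "strict_po_on (states A) (strict_part (bw_incl A))"
    unfolding strict_po_on_def using tr irr by blast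
  show "lang (prune A (P_rel A (strict_part (bw_incl A)) (=))) = lang A"
  proof (rule general[OF assms(1) po])
    show "\<forall>p\<in>states A. \<forall>q\<in>states A. strict_part (bw_incl A) p q \<longrightarrow> bw_incl A p q"
      unfolding strict_part_def by blast
  qed
qed

end
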